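(* Let $G=(V,E)$ be a directed graph with a partition $R_1,\dots,R_k$ of $V$, let $A$ be a scheduling algorithm, $f\in\mathbb{N}$, $\ell=2f+1$, and let $(G',P,A')$ be the partitioned Byzantine reinforcement described in the context. Let $F'\subseteq V'$ be the set of faulty nodes, which may behave arbitrarily. Suppose that for each $k'\in[k]$ there are at least $f+1$ indices $i\in[\ell]$ with $\{v_i : v\in R_{k'}\}\cap F'=\emptyset$. Then $A'$ simulates $A$: for each $v\in V$, a strict majority of the copies $v_i$, $i\in[\ell]$, compute in every round the state of $v$ in the fault-free execution of $A$.
   Context: Model: a synchronous network is a directed graph $G=(V,E)$. A scheduling algorithm $A$ assigns a state to each node; in each round each node may receive environment input, decides from its state which message (if any) to send on each outgoing link, and updates its state from messages received on incoming links. Write $[\ell]=\{1,\dots,\ell\}$. Partitioned Byzantine reinforcement: given a partition $R_1,\dots,R_k$ of $V$, set $V'=V\times[\ell]$, $v_i=(v,i)$, $P(v_i)=v$. For $e=(v,w)\in E$, $E'_e=\{(v_i,w_i): i\in[\ell]\}$ if $v,w$ lie in the same region, and $E'_e=\{(v_i,w_j): i,j\in[\ell]\}$ otherwise; $E'=\bigcup_e E'_e$. Each copy receives the environment input of its original. For $v'\in V'$ and $(w,P(v'))\in E$ let $N_{v'}(w)=\{w'\in V' : P(w')=w,\ (w',v')\in E'\}$. Algorithm $A'$: each $v'$ initializes local copies of the state of $P(v')$ as in $A$; in each round sends on each $(v',w')\in E'$ the message $P(v')$ would send on $(P(v'),P(w'))$ under $A$ according to its local state (an arbitrary message if it cannot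 compute it correctly); and updates its state as if $P(v')$ had received, from each in-neighbor $w$, the message sent by the majority of the nodes in $N_{v'}(w)$. *)

theory Defs
  imports Main "HOL-Library.Disjoint_Sets"
begin

(* A scheduling algorithm A on G=(V,E) is given by
   init  :: 'v => 's                         (initial state of each node)
   send  :: 'v => 'v => 's => 'i => 'm option (message, if any, node v sends on (v,w),
                                               given its state and this round's input)
   upd :: 'v => 's => 'i => ('v => 'm option) => 's
                                              (state update from state, input and the
                                               messages received from in-neighbours;
                                               None = no message)
   env   :: nat => 'v => 'i                   (environment input of node v in round r) *)

primrec exec ::
  "('v \<times> 'v) set \<Rightarrow> ('v \<Rightarrow> 's) \<Rightarrow> ('v \<Rightarrow> 'v \<Rightarrow> 's \<Rightarrow> 'i \<Rightarrow> 'm option) \<Rightarrow>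
   ('v \<Rightarrow> 's \<Rightarrow> 'i \<Rightarrow> ('v \<Rightarrow> 'm option) \<Rightarrow> 's) \<Rightarrow> (nat \<Rightarrow> 'v \<Rightarrow> 'i) \<Rightarrow> nat \<Rightarrow> 'v \<Rightarrow> 's"
where
  "exec E init send upd env 0 = init"
| "exec E init send upd env (Suc r) =
     (\<lambda>v. upd v (exec E init send upd env r v) (env r v)
        (\<lambda>w. if (w, v) \<in> E then send w v (exec E init send upd env r w) (env r w) else None))"

definition same_region :: "'v set set \<Rightarrow> 'v \<Rightarrow> 'v \<Rightarrow> bool" where
  "same_region Rs v w \<longleftrightarrow> (\<exists>R\<in>Rs. v \<in> R \<and> w \<in> R)"

definition reinf_nodes :: "'v set \<Rightarrow> nat \<Rightarrow> ('v \<times> nat) set" where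
  "reinf_nodes V l = V \<times> {1..l}"

definition reinf_edges :: "('v \<times> 'v) set \<Rightarrow> 'v set set \<Rightarrow> nat \<Rightarrow> (('v \<times> nat) \<times> ('v \<times> nat)) set" where
  "reinf_edges E Rs l = {((v, i), (w, j)). (v, w) \<in> E \<and> i \<in> {1..l} \<and> j \<in> {1..l} \<and>
                            (same_region Rs v w \<longrightarrow> i = j)}"

definition nbr_copies :: "'v set \<Rightarrow> ('v \<times> 'v) set \<Rightarrow> 'v set set \<Rightarrow> nat \<Rightarrow> 'v \<times> nat \<Rightarrow> 'v \<Rightarrow> ('v \<times> nat) set" where
  "nbr_copies V E Rs l v' w = {w' \<in> reinf_nodes V l. fst w' = w \<and> (w', v') \<in> reinf_edges E Rs l}"

(* st' r v' : state of node v' of G' at (the start of) round r;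
   msg r v' w' : message sent on the edge (v',w') of E' in round r.
   Non-faulty nodes (in V' - F) follow A'; faulty nodes are unconstrained (arbitrary states
   and arbitrary messages).  When no strict majority exists among N_{v'}(w), the value taken
   for w's message is arbitrary (any tie-breaking rule, even round/state dependent). *)
definition reinf_exec ::
  "'v set \<Rightarrow> ('v \<times> 'v) set \<Rightarrow> 'v set set \<Rightarrow> nat \<Rightarrow>
   ('v \<Rightarrow> 's) \<Rightarrow> ('v \<Rightarrow> 'v \<Rightarrow> 's \<Rightarrow> 'i \<Rightarrow> 'm option) \<Rightarrow>
   ('v \<Rightarrow> 's \<Rightarrow> 'i \<Rightarrow> ('v \<Rightarrow> 'm option) \<Rightarrow> 's) \<Rightarrow> (nat \<Rightarrow> 'v \<Rightarrow> 'i) \<Rightarrow>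
   ('v \<times> nat) set \<Rightarrow> (nat \<Rightarrow> 'v \<times> nat \<Rightarrow> 's) \<Rightarrow> (nat \<Rightarrow> 'v \<times> nat \<Rightarrow> 'v \<times> nat \<Rightarrow> 'm option) \<Rightarrow> bool"
where
  "reinf_exec V E Rs l init send upd env F st' msg \<longleftrightarrow>
     (\<forall>v' \<in> reinf_nodes V l - F. st' 0 v' = init (fst v')) \<and>
     (\<forall>r v' w'. (v', w') \<in> reinf_edges E Rs l \<longrightarrow> v' \<notin> F \<longrightarrow>
         msg r v' w' = send (fst v') (fst w') (st' r v') (env r (fst v'))) \<and>
     (\<forall>r. \<forall>v' \<in> reinf_nodes V l - F. \<exists>rcv.
         st' (Suc r) v' = upd (fst v') (st' r v') (env r (fst v')) rcv \<and>
         (\<forall>w. (w, fst v') \<notin> E \<longrightarrow> rcv w = None) \<and>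
         (\<forall>w m. (w, fst v') \<in> E \<longrightarrow>
             2 * card {w' \<in> nbr_copies V E Rs l v' w. msg r w' v' = m} > card (nbr_copies V E Rs l v' w)
             \<longrightarrow> rcv w = m))"

end

theory Submission
  imports Defs
begin

theorem lemma5:
  fixes V :: "'v set" and E :: "('v \<times> 'v) set" and Rs :: "'v set set"
    and init :: "'v \<Rightarrow> 's" and send :: "'v \<Rightarrow> 'v \<Rightarrow> 's \<Rightarrow> 'i \<Rightarrow> 'm option"
    and upd :: "'v \<Rightarrow> 's \<Rightarrow> 'i \<Rightarrow> ('v \<Rightarrow> 'm option) \<Rightarrow> 's"
    and env :: "nat \<Rightarrow> 'v \<Rightarrow> 'i"
    and f l :: nat and F :: "('v \<times> nat) set"
    and st' :: "nat \<Rightarrow> 'v \<times> nat \<Rightarrow> 's" and msg :: "nat \<Rightarrow> 'v \<times> nat \<Rightarrow> 'v \<times> nat \<Rightarrow> 'm option"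
  assumes "E \<subseteq> V \<times> V"
    and "partition_on V Rs"
    and "l = 2 * f + 1"
    and "F \<subseteq> reinf_nodes V l"
    and "\<forall>R \<in> Rs. card {i \<in> {1..l}. {(v, i) | v. v \<in> R} \<inter> F = {}} \<ge> f + 1"
    and "reinf_exec V E Rs l init send upd env F st' msg"
  shows "\<forall>v \<in> V. \<forall>r. 2 * card {i \<in> {1..l}. (v, i) \<notin> F \<and> st' r (v, i) = exec E init send upd env r v} > l"
proof -
  note EV = assms(1) and part = assms(2) and lf = assms(3) and good = assms(5)
  define G where "G R = {i \<in> {1..l}. {(v, i) | v. v \<in> R} \<inter> F = {}}" for R
  have Gcard: "card (G R) \<ge> f + 1" if "R \<in> Rs" for R using good that G_def by auto
  have RV: "R \<subseteq> V" if "R \<in> Rs" for R using partition_onD1[OF part] that by auto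
  have Rex: "\<exists>R\<in>Rs. v \<in> R" if "v \<in> V" for v using partition_onD1[OF part] that by auto
  have Runiq: "R1 = R2" if "R1 \<in> Rs" "R2 \<in> Rs" "v \<in> R1" "v \<in> R2" for R1 R2 v
    using disjointD[OF partition_onD2[OF part] that(1,2)] that by auto
  have GF: "(v, i) \<notin> F" "i \<in> {1..l}" if "i \<in> G R" "v \<in> R" for v i R
    using that unfolding G_def by auto
  note ex = assms(6)[unfolded reinf_exec_def]
  have ex1: "\<And>v'. v' \<in> reinf_nodes V l - F \<Longrightarrow> st' 0 v' = init (fst v')" using ex by blast
  have ex2: "\<And>r v' w'. (v', w') \<in> reinf_edges E Rs l \<Longrightarrow> v' \<notin> F \<Longrightarrow>
         msg r v' w' = send (fst v') (fst w') (st' r v') (env r (fst v'))" using ex by blast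
  have ex3: "\<And>r v'. v' \<in> reinf_nodes V l - F \<Longrightarrow> \<exists>rcv.
         st' (Suc r) v' = upd (fst v') (st' r v') (env r (fst v')) rcv \<and>
         (\<forall>w. (w, fst v') \<notin> E \<longrightarrow> rcv w = None) \<and>
         (\<forall>w m. (w, fst v') \<in> E \<longrightarrow>
             2 * card {w' \<in> nbr_copies V E Rs l v' w. msg r w' v' = m} > card (nbr_copies V E Rs l v' w)
             \<longrightarrow> rcv w = m)" using ex by blast
  have key: "\<forall>R\<in>Rs. \<forall>v\<in>R. \<forall>i\<in>G R. st' r (v, i) = exec E init send upd env r v" for r
  proof (induction r)
    case 0
    show ?case
    proof (intro ballI)
      fix R v i assume R: "R \<in> Rs" and v: "v \<in> R" and i: "i \<in> G R"
      have "(v, i) \<in> reinf_nodes V l - F" using GF[OF i v] RV[OF R] v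
        unfolding reinf_nodes_def by auto
      then show "st' 0 (v, i) = exec E init send upd env 0 v" using ex1 by auto
    qed
  next
    case (Suc r)
    show ?case
    proof (intro ballI)
      fix R v i assume R: "R \<in> Rs" and v: "v \<in> R" and i: "i \<in> G R"
      have vi: "(v, i) \<in> reinf_nodes V l - F" using GF[OF i v] RV[OF R] v
        unfolding reinf_nodes_def by auto
      obtain rcv where
        r1: "st' (Suc r) (v, i) = upd v (st' r (v, i)) (env r v) rcv" and
        r2: "\<forall>w. (w, v) \<notin> E \<longrightarrow> rcv w = None" and
        r3: "\<forall>w m. (w, v) \<in> E \<longrightarrow>
             2 * card {w' \<in> nbr_copies V E Rs l (v, i) w. msg r w' (v, i) = m} > card (nbr_copies V E Rs l (v, i) w)
             \<longrightarrow> rcv w = m"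
        using ex3[OF vi, of r] by auto
      have rcv: "rcv = (\<lambda>w. if (w, v) \<in> E then send w v (exec E init send upd env r w) (env r w) else None)"
      proof
        fix w
        show "rcv w = (if (w, v) \<in> E then send w v (exec E init send upd env r w) (env r w) else None)"
        proof (cases "(w, v) \<in> E")
          case False then show ?thesis using r2 by auto
        next
          case wE: True
          define m where "m = send w v (exec E init send upd env r w) (env r w)"
          have wV: "w \<in> V" using wE EV by auto
          have iL: "i \<in> {1..l}" using GF[OF i v] by auto
          have "2 * card {w' \<in> nbr_copies V E Rs l (v, i) w. msg r w' (v, i) = m} > card (nbr_copies V E Rs l (v, i) w)"
          proof (cases "same_region Rs w v")
            case True
            then obtain R'' where R'': "R'' \<in> Rs" "w \<in> R''" "v \<in> R''" unfolding same_region_def by auto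
            have "R'' = R" using Runiq[OF R''(1) R R''(3) v] .
            with R'' have wR: "w \<in> R" by auto
            have N: "nbr_copies V E Rs l (v, i) w = {(w, i)}"
              using True wE wV iL unfolding nbr_copies_def reinf_nodes_def reinf_edges_def by auto
            have edge: "((w, i), (v, i)) \<in> reinf_edges E Rs l"
              using wE iL unfolding reinf_edges_def by auto
            have "msg r (w, i) (v, i) = m"
              using ex2[OF edge GF(1)[OF i wR]] Suc[rule_format, OF R wR i] m_def by simp
            then have "{w' \<in> nbr_copies V E Rs l (v, i) w. msg r w' (v, i) = m} = {(w, i)}"
              using N by auto
            then show ?thesis using N by simp
          next
            case False
            obtain R' where R': "R' \<in> Rs" "w \<in> R'" using Rex[OF wV] by auto
            have N: "nbr_copies V E Rs l (v, i) w = {w} \<times> {1..l}"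
              using False wE wV iL unfolding nbr_copies_def reinf_nodes_def reinf_edges_def by auto
            have sub: "{w} \<times> G R' \<subseteq> {w' \<in> nbr_copies V E Rs l (v, i) w. msg r w' (v, i) = m}"
            proof
              fix x assume "x \<in> {w} \<times> G R'"
              then obtain j where x: "x = (w, j)" and j: "j \<in> G R'" by auto
              have jL: "j \<in> {1..l}" using GF[OF j R'(2)] by auto
              have edge: "((w, j), (v, i)) \<in> reinf_edges E Rs l"
                using wE iL jL False unfolding reinf_edges_def by auto
              have "msg r (w, j) (v, i) = m"
                using ex2[OF edge GF(1)[OF j R'(2)]] Suc[rule_format, OF R'(1) R'(2) j] m_def by simp
              then show "x \<in> {w' \<in> nbr_copies V E Rs l (v, i) w. msg r w' (v, i) = m}"
                using x N jL by auto
            qed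
            have "finite {w' \<in> nbr_copies V E Rs l (v, i) w. msg r w' (v, i) = m}" using N by simp
            from card_mono[OF this sub]
            have "card (G R') \<le> card {w' \<in> nbr_copies V E Rs l (v, i) w. msg r w' (v, i) = m}"
              by (simp add: card_cartesian_product)
            then have "card {w' \<in> nbr_copies V E Rs l (v, i) w. msg r w' (v, i) = m} \<ge> f + 1"
              using Gcard[OF R'(1)] by linarith
            moreover have "card (nbr_copies V E Rs l (v, i) w) = l" using N by (simp add: card_cartesian_product)
            ultimately show ?thesis using lf by linarith
          qed
          then show ?thesis using r3 wE m_def by auto
        qed
      qed
      show "st' (Suc r) (v, i) = exec E init send upd env (Suc r) v"
        using r1 rcv Suc[rule_format, OF R v i] by simp
    qed
  qed
  show ?thesis
  proof (intro ballI allI)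
    fix v r assume vV: "v \<in> V"
    obtain R where R: "R \<in> Rs" "v \<in> R" using Rex[OF vV] by auto
    have "G R \<subseteq> {i \<in> {1..l}. (v, i) \<notin> F \<and> st' r (v, i) = exec E init send upd env r v}"
      using GF[OF _ R(2)] key R by blast
    then have "card (G R) \<le> card {i \<in> {1..l}. (v, i) \<notin> F \<and> st' r (v, i) = exec E init send upd env r v}"
      by (intro card_mono) auto
    then show "2 * card {i \<in> {1..l}. (v, i) \<notin> F \<and> st' r (v, i) = exec E init send upd env r v} > l"
      using Gcard[OF R(1)] lf by linarith
  qed
qed

end
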